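(* The function $h$ satisfies $h(\emptyset)=0$ and, for every nonempty finite $L\subseteq\mathbb{N}$, $$h(L)=1+\max_{M\in S(L)}\min\{h(L\cap M),\,h(L\cap(M-1))\},$$ where $S(L)$ is the set of all finite $M\subseteq\mathbb{N}$ with $M\neq L$ and $0<|M|\le|L|$.
   Context: $\mathbb{N}=\{0,1,2,\ldots\}$. For a finite $L\subseteq\mathbb{N}$ and an integer $r$, write $L+r:=\{x+r: x\in L,\ x+r\ge 0\}$ (so $L-1=\{x-1:x\in L, x\ge1\}$). Define $h$ on finite subsets of $\mathbb{N}$ recursively on $|L|$: $h(\emptyset)=0$, and for $L\neq\emptyset$, $$h(L)=1+\max\Big\{h(L\cap(L+1)),\ \max_{M\in T(L)}\min\{h(L\cap M),\,h(L\cap(M-1))\}\Big\},$$ where $T(L)$ is the set of all finite $M\subseteq\mathbb{N}$ with $M\notin\{L,L+1\}$ and $0<|M|\le|L|$ (all sets $L\cap(L+1)$, $L\cap M$, $L\cap(M-1)$ appearing here have size less than $|L|$, so the recursion is well defined). *)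

theory Defs
  imports Main
begin

definition shift_up :: "nat set \<Rightarrow> nat set" where
  "shift_up L = {x + 1 | x. x \<in> L}"

definition shift_down :: "nat set \<Rightarrow> nat set" where
  "shift_down M = {x - 1 | x. x \<in> M \<and> x \<ge> 1}"

definition T_set :: "nat set \<Rightarrow> nat set set" where
  "T_set L = {M. finite M \<and> M \<noteq> L \<and> M \<noteq> shift_up L \<and> 0 < card M \<and> card M \<le> card L}"

definition S_set :: "nat set \<Rightarrow> nat set set" where
  "S_set L = {M. finite M \<and> M \<noteq> L \<and> 0 < card M \<and> card M \<le> card L}"

lemma card_inter_lt:
  assumes "finite L" "L \<noteq> {}" "M \<in> T_set L"
  shows "card (L \<inter> M) < card L"
proof -
  have "L \<inter> M \<noteq> L"
  proof
    assume "L \<inter> M = L"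
    hence "L \<subseteq> M" by auto
    moreover have "finite M" "card M \<le> card L" using assms(3) by (auto simp: T_set_def)
    ultimately have "M = L" using card_subset_eq card_mono le_antisym by metis
    thus False using assms(3) by (auto simp: T_set_def)
  qed
  thus ?thesis using assms(1) by (meson Int_lower1 card_mono le_neq_implies_less card_subset_eq)
qed

lemma card_shift_down_le: "finite M \<Longrightarrow> card (shift_down M) \<le> card M"
proof -
  assume "finite M"
  have "shift_down M = (\<lambda>x. x - 1) ` {x \<in> M. x \<ge> 1}" by (auto simp: shift_down_def)
  hence "card (shift_down M) \<le> card {x \<in> M. x \<ge> 1}" by (simp add: card_image_le \<open>finite M\<close>)
  also have "\<dots> \<le> card M" using \<open>finite M\<close> by (intro card_mono) auto
  finally show ?thesis .
qed

lemma card_inter_down_lt: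
  assumes "finite L" "L \<noteq> {}" "M \<in> T_set L"
  shows "card (L \<inter> shift_down M) < card L"
proof -
  have fM: "finite M" "card M \<le> card L" "M \<noteq> shift_up L" using assms(3) by (auto simp: T_set_def)
  have "L \<inter> shift_down M \<noteq> L"
  proof
    assume "L \<inter> shift_down M = L"
    hence sub: "L \<subseteq> shift_down M" by auto
    have fd: "finite (shift_down M)" using fM(1) unfolding shift_down_def by simp
    have "card (shift_down M) \<le> card L" using card_shift_down_le[OF fM(1)] fM(2) by simp
    hence eq: "shift_down M = L" using sub fd card_subset_eq card_mono le_antisym by metis
    define D where "D = {x \<in> M. x \<ge> 1}"
    have fD: "finite D" using fM(1) by (simp add: D_def)
    have img: "shift_down M = (\<lambda>x. x - 1) ` D" by (auto simp: shift_down_def D_def)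
    have "inj_on (\<lambda>x. x - 1) D" by (auto simp: inj_on_def D_def)
    hence cD: "card (shift_down M) = card D" using img card_image by metis
    have "0 \<notin> M"
    proof
      assume "0 \<in> M"
      hence "D \<subset> M" by (auto simp: D_def)
      hence "card D < card M" using fM(1) psubset_card_mono by blast
      thus False using cD eq fM(2) by simp
    qed
    hence DM: "D = M" by (auto simp: D_def Suc_le_eq intro: gr0I)
    have "shift_up L = (\<lambda>x. x + 1) ` ((\<lambda>x. x - 1) ` D)" using eq img by (auto simp: shift_up_def)
    also have "\<dots> = D" by (force simp: D_def image_image)
    finally have "shift_up L = M" using DM by simp
    thus False using fM(3) by simp
  qed
  thus ?thesis using assms(1) by (meson Int_lower1 card_mono le_neq_implies_less card_subset_eq)
qed

lemma card_inter_up_lt: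
  assumes "finite L" "L \<noteq> {}"
  shows "card (L \<inter> shift_up L) < card L"
proof -
  have "L \<inter> shift_up L \<noteq> L"
  proof
    assume "L \<inter> shift_up L = L"
    hence "Min L \<in> shift_up L" using assms Min_in by blast
    then obtain x where "x \<in> L" "Min L = x + 1" by (auto simp: shift_up_def)
    thus False using Min_le[OF assms(1) \<open>x \<in> L\<close>] by simp
  qed
  thus ?thesis using assms(1) by (meson Int_lower1 card_mono le_neq_implies_less card_subset_eq)
qed

function h :: "nat set \<Rightarrow> nat" where
  "h L = (if finite L \<and> L \<noteq> {} then
      1 + max (h (L \<inter> shift_up L))
              (Max ((\<lambda>M. min (h (L \<inter> M)) (h (L \<inter> shift_down M))) ` T_set L))
    else 0)"
  by auto
termination
  by (relation "measure card")
     (auto intro: card_inter_lt card_inter_down_lt card_inter_up_lt)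

declare h.simps[simp del]

end

theory Submission
  imports Defs
begin

lemma shift_down_up: "shift_down (shift_up L) = L"
  by (force simp: shift_down_def shift_up_def)

lemma shift_up_card: "card (shift_up L) = card L"
proof -
  have "shift_up L = (\<lambda>x. x + 1) ` L" by (auto simp: shift_up_def)
  thus ?thesis by (simp add: card_image)
qed

lemma shift_up_finite: "finite L \<Longrightarrow> finite (shift_up L)"
proof -
  assume "finite L"
  have "shift_up L = (\<lambda>x. x + 1) ` L" by (auto simp: shift_up_def)
  thus ?thesis using \<open>finite L\<close> by simp
qed

lemma S_eq: assumes "finite L" "L \<noteq> {}"
  shows "S_set L = insert (shift_up L) (T_set L)"
proof -
  have ne: "shift_up L \<noteq> L" using card_inter_up_lt[OF assms] by auto
  have "0 < card L" using assms by (simp add: card_gt_0_iff)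
  hence "shift_up L \<in> S_set L" using ne shift_up_finite[OF assms(1)] shift_up_card[of L]
    by (simp add: S_set_def)
  thus ?thesis by (auto simp: S_set_def T_set_def)
qed

lemma T_ne: assumes "finite L" "L \<noteq> {}" shows "T_set L \<noteq> {}"
proof -
  have fin: "finite (L \<union> shift_up L)" using assms shift_up_finite by simp
  obtain x where x: "x \<notin> L \<union> shift_up L" using fin infinite_UNIV_nat
    by (metis ex_new_if_finite)
  have "{x} \<noteq> L" "{x} \<noteq> shift_up L" using x by auto
  moreover have "card L \<ge> 1" using assms by (simp add: Suc_le_eq card_gt_0_iff)
  ultimately have "{x} \<in> T_set L" by (simp add: T_set_def)
  thus ?thesis by auto
qed

theorem proposition12:
  shows "h {} = 0 \<and>
    (\<forall>L::nat set. finite L \<and> L \<noteq> {} \<longrightarrow>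
       h L = 1 + Max ((\<lambda>M. min (h (L \<inter> M)) (h (L \<inter> shift_down M))) ` S_set L))"
proof (intro conjI allI impI)
  show "h {} = 0" by (simp add: h.simps)
next
  fix L :: "nat set" assume a: "finite L \<and> L \<noteq> {}"
  hence fL: "finite L" and nL: "L \<noteq> {}" by auto
  define f where "f = (\<lambda>M. min (h (L \<inter> M)) (h (L \<inter> shift_down M)))"
  have hL: "h L = 1 + max (h (L \<inter> shift_up L)) (Max (f ` T_set L))"
    using a by (subst h.simps) (simp add: f_def)
  have finF: "finite (f ` T_set L)"
  proof -
    have "f ` T_set L \<subseteq> (\<lambda>(A,B). min (h A) (h B)) ` (Pow L \<times> Pow L)"
      by (force simp: f_def image_iff)
    thus ?thesis using fL by (meson finite_Pow_iff finite_SigmaI finite_imageI finite_subset)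
  qed
  have neF: "f ` T_set L \<noteq> {}" using T_ne[OF fL nL] by simp
  have fup: "f (shift_up L) = h (L \<inter> shift_up L)"
    using hL by (simp add: f_def shift_down_up)
  have "f ` S_set L = insert (f (shift_up L)) (f ` T_set L)" using S_eq[OF fL nL] by simp
  hence "Max (f ` S_set L) = max (h (L \<inter> shift_up L)) (Max (f ` T_set L))"
    using finF neF fup by simp
  thus "h L = 1 + Max ((\<lambda>M. min (h (L \<inter> M)) (h (L \<inter> shift_down M))) ` S_set L)"
    using hL by (simp add: f_def)
qed

end
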